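(* Let $R$ be a UFD with fraction field $K$, let $A(X), B(X)\in R[X]$ with $A(0)=B(0)=0$, and let $b\in R\setminus\{0\}$ with $\gcd(B,b)=1$. If $A\!\left(\frac{B(X)}{b}\right)\in R[X]$, then there exists $C(X)\in R[X]$ with $A(X)=C(bX)$; equivalently, for every $k\ge1$ the coefficient of $X^k$ in $A(X)$ is divisible by $b^k$.
   Context: For a polynomial $P\in R[X]$ and $c\in R$, $\gcd(P,c)=1$ means that no prime element of $R$ divides both $c$ and all coefficients of $P$. *)

theory Defs
  imports "HOL-Computational_Algebra.Polynomial_Factorial"
begin

(* gcd(P,c) = 1 in the paper's sense: no prime element of R divides both c
   and all coefficients of P *)
definition poly_const_coprime :: "'a::{factorial_semiring,idom} poly \<Rightarrow> 'a \<Rightarrow> bool" where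
  "poly_const_coprime P c \<longleftrightarrow>
     (\<forall>p. prime_elem p \<longrightarrow> \<not> (p dvd c \<and> (\<forall>i. p dvd coeff P i)))"

end

theory Submission
  imports Defs
begin

lemma diff_dvd_power_diff:
  fixes x y :: "'b::comm_ring_1"
  shows "(x - y) dvd (x ^ k - y ^ k)"
proof (induction k)
  case 0 then show ?case by simp
next
  case (Suc k)
  have "x ^ Suc k - y ^ Suc k = x * (x ^ k - y ^ k) + (x - y) * y ^ k"
    by (simp add: algebra_simps)
  then show ?case using Suc by (simp add: dvd_add)
qed

lemma pcompose_monom_gen: "pcompose (monom c n) q = smult c (q ^ n)"
  by (induction n) (simp_all add: monom_Suc pcompose_pCons monom_0)

lemma pcompose_expand:
  assumes "degree p \<le> n"
  shows "pcompose p q = (\<Sum>k\<le>n. smult (coeff p k) (q ^ k))"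
proof -
  have "pcompose p q = pcompose (\<Sum>i\<le>n. monom (coeff p i) i) q"
    using poly_as_sum_of_monoms'[OF assms] by simp
  also have "\<dots> = (\<Sum>k\<le>n. smult (coeff p k) (q ^ k))"
    by (simp add: pcompose_sum pcompose_monom_gen)
  finally show ?thesis .
qed

lemma smult_sum_right: "smult a (\<Sum>i\<in>S. f i) = (\<Sum>i\<in>S. smult a (f i))"
  by (induction S rule: infinite_finite_induct) (simp_all add: smult_add_right)

lemma fract_poly_sum:
  "map_poly to_fract (\<Sum>i\<in>S. f i) = (\<Sum>i\<in>S. map_poly to_fract (f i))"
  by (induction S rule: infinite_finite_induct) simp_all

lemma fract_poly_power:
  "map_poly to_fract (p ^ k) = (map_poly to_fract p) ^ k"
  by (induction k) simp_all

lemma to_fract_power': "to_fract (x ^ k) = to_fract x ^ k"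
  by (induction k) simp_all

lemma B_power_coeffs:
  fixes p :: "'a::{factorial_semiring,idom}"
  assumes p: "prime_elem p" and low: "\<forall>i<m. p dvd coeff B i" and nd: "\<not> p dvd coeff B m"
  shows "(\<forall>j<k*m. p dvd coeff (B^k) j) \<and> \<not> p dvd coeff (B^k) (k*m)"
proof -
  define Q where "Q = map_poly (\<lambda>x. x div p) (poly_cutoff m B)"
  define Y where "Y = monom 1 m * poly_shift m B"
  have BQ: "B = smult p Q + Y"
  proof (rule poly_eqI)
    fix i
    show "coeff B i = coeff (smult p Q + Y) i"
      using low by (auto simp: Q_def Y_def coeff_map_poly coeff_poly_cutoff coeff_monom_mult
          coeff_poly_shift)
  qed
  have "(B - Y) dvd (B ^ k - Y ^ k)" by (rule diff_dvd_power_diff)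
  then obtain F where F: "B ^ k - Y ^ k = smult p Q * F" using BQ by (auto elim!: dvdE)
  hence Bk: "B ^ k = Y ^ k + smult p (Q * F)" by (simp add: algebra_simps)
  have Yk: "Y ^ k = monom 1 (k*m) * (poly_shift m B) ^ k"
    by (simp add: Y_def power_mult_distrib monom_power mult.commute)
  have c: "coeff (B ^ k) j = coeff (monom 1 (k*m) * (poly_shift m B) ^ k) j + p * coeff (Q*F) j" for j
    using Bk Yk by simp
  show ?thesis
  proof (intro conjI allI impI notI)
    fix j assume "j < k*m"
    then show "p dvd coeff (B^k) j" using c[of j] by (simp add: coeff_monom_mult)
  next
    assume h: "p dvd coeff (B^k) (k*m)"
    have "coeff (B^k) (k*m) = (coeff B m) ^ k + p * coeff (Q*F) (k*m)"
      using c[of "k*m"] by (simp add: coeff_monom_mult coeff_0_power coeff_poly_shift)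
    with h have "p dvd (coeff B m) ^ k" by (simp add: dvd_add_left_iff)
    then have "p dvd coeff B m" using prime_elem_dvd_power[OF p] by blast
    with nd show False by simp
  qed
qed

lemma core:
  fixes p :: "'a::{factorial_semiring,idom}"
  assumes p: "prime_elem p" and B0: "coeff B 0 = 0" and ex: "\<exists>i. \<not> p dvd coeff B i"
    and S: "\<forall>j. p ^ N dvd coeff (\<Sum>k\<le>n. smult (c k) (B ^ k)) j"
  shows "\<forall>k\<le>n. p ^ N dvd c k"
proof (rule ccontr)
  assume "\<not> (\<forall>k\<le>n. p ^ N dvd c k)"
  then obtain k0 where k0: "k0 \<le> n" "\<not> p ^ N dvd c k0" by blast
  have p0: "p \<noteq> 0" using p by auto
  have N0: "N \<noteq> 0" using k0 by (cases N) auto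
  define \<mu> where "\<mu> = (LEAST \<mu>. \<exists>k\<le>n. \<not> p ^ Suc \<mu> dvd c k)"
  have exmu: "\<exists>k\<le>n. \<not> p ^ Suc (N - 1) dvd c k" using k0 N0 by auto
  have mu1: "\<exists>k\<le>n. \<not> p ^ Suc \<mu> dvd c k" unfolding \<mu>_def by (rule LeastI_ex) (use exmu in blast)
  have muN: "\<mu> \<le> N - 1" unfolding \<mu>_def by (rule Least_le) (use exmu in blast)
  have all: "p ^ \<mu> dvd c k" if "k \<le> n" for k
  proof (cases \<mu>)
    case 0 then show ?thesis by simp
  next
    case (Suc \<mu>')
    have "\<not> (\<exists>k\<le>n. \<not> p ^ Suc \<mu>' dvd c k)"
      using not_less_Least[of \<mu>' "\<lambda>\<mu>. \<exists>k\<le>n. \<not> p ^ Suc \<mu> dvd c k"] Suc \<mu>_def by simp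
    then show ?thesis using that Suc by blast
  qed
  define k1 where "k1 = (LEAST k. k \<le> n \<and> \<not> p ^ Suc \<mu> dvd c k)"
  have k1: "k1 \<le> n" "\<not> p ^ Suc \<mu> dvd c k1" unfolding k1_def
    using LeastI_ex[of "\<lambda>k. k \<le> n \<and> \<not> p ^ Suc \<mu> dvd c k"] mu1 by blast+
  have below: "p ^ Suc \<mu> dvd c k" if "k < k1" "k \<le> n" for k
    using not_less_Least[of k "\<lambda>k. k \<le> n \<and> \<not> p ^ Suc \<mu> dvd c k"] that k1_def by blast
  define d where "d k = c k div p ^ \<mu>" for k
  have cd: "c k = p ^ \<mu> * d k" if "k \<le> n" for k
    using all[OF that] by (simp add: d_def)
  define m where "m = (LEAST i. \<not> p dvd coeff B i)"
  have m: "\<not> p dvd coeff B m" unfolding m_def by (rule LeastI_ex) (rule ex)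
  have lowm: "\<forall>i<m. p dvd coeff B i" using not_less_Least m_def by blast
  have m0: "m > 0" using m B0 by (cases m) auto
  define j where "j = k1 * m"
  have "coeff (\<Sum>k\<le>n. smult (c k) (B ^ k)) j = (\<Sum>k\<le>n. c k * coeff (B^k) j)"
    by (simp add: coeff_sum)
  also have "\<dots> = p ^ \<mu> * (\<Sum>k\<le>n. d k * coeff (B^k) j)"
    by (simp add: sum_distrib_left cd mult.assoc)
  finally have "p ^ N dvd p ^ \<mu> * (\<Sum>k\<le>n. d k * coeff (B^k) j)" using S by metis
  moreover have "p ^ \<mu> * p dvd p ^ N"
    using muN N0 by (metis Suc_le_eq diff_less le_imp_less_Suc power_Suc2 le_imp_power_dvd zero_less_one
       le_less_trans less_eq_Suc_le not_gr_zero)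
  ultimately have "p ^ \<mu> * p dvd p ^ \<mu> * (\<Sum>k\<le>n. d k * coeff (B^k) j)"
    using dvd_trans by blast
  hence Sd: "p dvd (\<Sum>k\<le>n. d k * coeff (B^k) j)" using p0 by simp
  have rest: "p dvd (\<Sum>k\<in>{..n}-{k1}. d k * coeff (B^k) j)"
  proof (rule dvd_sum)
    fix k assume k: "k \<in> {..n}-{k1}"
    show "p dvd d k * coeff (B^k) j"
    proof (cases "k < k1")
      case True
      have "p ^ \<mu> * p dvd p ^ \<mu> * d k" using below[OF True] k cd[of k] by (simp add: power_Suc2)
      hence "p dvd d k" using p0 by simp
      then show ?thesis by simp
    next
      case False
      hence "k1 < k" using k by auto
      hence "j < k * m" unfolding j_def using m0 by simp
      then show ?thesis using B_power_coeffs[OF p lowm m, of k] by simp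
    qed
  qed
  have "(\<Sum>k\<le>n. d k * coeff (B^k) j) = d k1 * coeff (B^k1) j + (\<Sum>k\<in>{..n}-{k1}. d k * coeff (B^k) j)"
    using k1(1) by (simp add: sum.remove)
  with Sd rest have "p dvd d k1 * coeff (B^k1) j" by (simp add: dvd_add_left_iff)
  hence "p dvd d k1 \<or> p dvd coeff (B^k1) (k1*m)" using p by (simp add: prime_elem_dvd_mult_iff j_def)
  moreover have "\<not> p dvd coeff (B^k1) (k1*m)" using B_power_coeffs[OF p lowm m, of k1] by simp
  moreover have "\<not> p dvd d k1"
  proof
    assume "p dvd d k1"
    hence "p ^ \<mu> * p dvd p ^ \<mu> * d k1" by simp
    hence "p ^ Suc \<mu> dvd c k1" using cd[OF k1(1)] by (simp add: power_Suc2)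
    with k1 show False by simp
  qed
  ultimately show False by blast
qed

theorem mainTheorem2:
  fixes A B :: "'a::{factorial_semiring,idom} poly" and b :: 'a
  assumes "poly A 0 = 0" and "poly B 0 = 0"
    and "b \<noteq> 0"
    and "poly_const_coprime B b"
    and "\<exists>D :: 'a poly. pcompose (map_poly to_fract A)
                          (smult (inverse (to_fract b)) (map_poly to_fract B))
                        = map_poly to_fract D"
  shows "(\<exists>C :: 'a poly. A = pcompose C [:0, b:])
         \<and> (\<forall>k\<ge>1. b ^ k dvd coeff A k)"
proof -
  obtain D where D: "pcompose (map_poly to_fract A)
                          (smult (inverse (to_fract b)) (map_poly to_fract B))
                        = map_poly to_fract D" using assms(5) by blast
  define n where "n = degree A"
  define c where "c k = coeff A k * b ^ (n - k)" for k
  have tb: "to_fract b \<noteq> 0" using assms(3) by simp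
  have degA: "degree (map_poly to_fract A) = n"
    unfolding n_def by (rule degree_map_poly) simp
  have "map_poly to_fract D = (\<Sum>k\<le>n. smult (coeff (map_poly to_fract A) k)
           ((smult (inverse (to_fract b)) (map_poly to_fract B)) ^ k))"
    using D pcompose_expand[of "map_poly to_fract A" n] degA by simp
  also have "\<dots> = (\<Sum>k\<le>n. smult (to_fract (coeff A k) * inverse (to_fract b) ^ k)
           ((map_poly to_fract B) ^ k))"
    by (simp add: coeff_map_poly smult_power)
  finally have "smult (to_fract b ^ n) (map_poly to_fract D) =
      (\<Sum>k\<le>n. smult (to_fract b ^ n * (to_fract (coeff A k) * inverse (to_fract b) ^ k))
           ((map_poly to_fract B) ^ k))"
    by (simp add: smult_sum_right)
  also have "\<dots> = (\<Sum>k\<le>n. smult (to_fract (c k)) ((map_poly to_fract B) ^ k))"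
  proof (rule sum.cong)
    fix k assume "k \<in> {..n}"
    hence "k \<le> n" by simp
    hence "to_fract b ^ n = to_fract b ^ (n - k) * to_fract b ^ k"
      by (simp add: power_add[symmetric])
    hence "to_fract b ^ n * (to_fract (coeff A k) * inverse (to_fract b) ^ k) = to_fract (c k)"
      using tb by (simp add: c_def field_simps to_fract_power')
    then show "smult (to_fract b ^ n * (to_fract (coeff A k) * inverse (to_fract b) ^ k))
           ((map_poly to_fract B) ^ k) = smult (to_fract (c k)) ((map_poly to_fract B) ^ k)" by simp
  qed simp
  finally have "map_poly to_fract (smult (b ^ n) D) =
       map_poly to_fract (\<Sum>k\<le>n. smult (c k) (B ^ k))"
    by (simp add: fract_poly_sum fract_poly_power to_fract_power')
  hence key: "(\<Sum>k\<le>n. smult (c k) (B ^ k)) = smult (b ^ n) D"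
    by (metis fract_poly_eq_iff)
  have B0: "coeff B 0 = 0" using assms(2) by (simp add: poly_0_coeff_0)
  have A0: "coeff A 0 = 0" using assms(1) by (simp add: poly_0_coeff_0)
  have mult: "multiplicity p (b ^ k) \<le> multiplicity p (coeff A k)"
    if p: "prime p" and k: "coeff A k \<noteq> 0" for p k
  proof -
    define e where "e = multiplicity p b"
    have pe: "prime_elem p" using p by simp
    have kn: "k \<le> n" using k unfolding n_def using le_degree by blast
    show ?thesis
    proof (cases "e = 0")
      case True then show ?thesis
        using prime_elem_multiplicity_power_distrib[OF pe assms(3)] e_def by simp
    next
      case False
      have "p ^ e dvd b" unfolding e_def by (rule multiplicity_dvd)
      hence "p dvd b" using False by (metis dvd_power dvd_trans not_gr_zero)
      hence ex: "\<exists>i. \<not> p dvd coeff B i" using assms(4) pe unfolding poly_const_coprime_def by blast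
      have "p ^ (n * e) dvd b ^ n" using \<open>p ^ e dvd b\<close>
        by (simp add: power_mult mult.commute dvd_power_same)
      hence S: "\<forall>j. p ^ (n*e) dvd coeff (\<Sum>k\<le>n. smult (c k) (B ^ k)) j"
        unfolding key by (simp add: dvd_mult2)
      have "p ^ (n*e) dvd c k" using core[OF pe B0 ex S] kn by blast
      moreover have ck: "c k \<noteq> 0" using k assms(3) by (simp add: c_def)
      ultimately have "n * e \<le> multiplicity p (c k)"
        using multiplicity_geI pe by (metis not_prime_unit p)
      also have "multiplicity p (c k) = multiplicity p (coeff A k) + (n - k) * e"
        unfolding c_def using k assms(3) pe
        by (simp add: prime_elem_multiplicity_mult_distrib prime_elem_multiplicity_power_distrib e_def)
      finally have "n * e \<le> multiplicity p (coeff A k) + (n - k) * e" .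
      moreover have "n * e = k * e + (n - k) * e" using kn by (simp add: add_mult_distrib[symmetric])
      ultimately have "k * e \<le> multiplicity p (coeff A k)" by linarith
      then show ?thesis
        using prime_elem_multiplicity_power_distrib[OF pe assms(3)] e_def by simp
    qed
  qed
  have dv: "b ^ k dvd coeff A k" for k
  proof (cases "coeff A k = 0")
    case True then show ?thesis by simp
  next
    case False
    show ?thesis by (rule multiplicity_le_imp_dvd) (use assms(3) mult False in auto)
  qed
  define C where "C = (\<Sum>i\<le>n. monom (coeff A i div b ^ i) i)"
  have "A = pcompose C [:0, b:]"
  proof (rule poly_eqI)
    fix i
    show "coeff A i = coeff (pcompose C [:0, b:]) i"
    proof (cases "i \<le> n")
      case True
      then show ?thesis using dv[of i]
        by (simp add: coeff_pcompose_linear C_def coeff_sum coeff_monom)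
    next
      case False
      then show ?thesis
        by (simp add: coeff_pcompose_linear C_def coeff_sum coeff_monom n_def coeff_eq_0)
    qed
  qed
  then show ?thesis using dv by blast
qed

end
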